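(* If $\alpha=1$ and $\beta\in[0,1]$, then $\{k^2+\alpha k+\beta\}_{k=0}^{\infty}$ is a Legendre multiplier sequence.
   Context: The Legendre polynomials $\mathfrak{Le}_n(x)$ are defined by $\frac{1}{\sqrt{1-2xt+t^2}}=\sum_{k=0}^{\infty}\mathfrak{Le}_k(x)t^k$. A real sequence $\{\gamma_k\}_{k=0}^{\infty}$ is a Legendre multiplier sequence if, for every $n$ and all real $a_0,\dots,a_n$, the polynomial $\sum_{k=0}^n a_k\gamma_k\mathfrak{Le}_k(x)$ has only real zeros whenever $\sum_{k=0}^n a_k\mathfrak{Le}_k(x)$ has only real zeros. *)

theory Defs
  imports "HOL-Computational_Algebra.Polynomial" Complex_Main
begin

text \<open>Legendre polynomials, generated by 1/sqrt(1-2xt+t^2) = sum Le_k(x) t^k,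
  realised via Bonnet's recurrence
  (n+1) Le_(n+1) = (2n+1) x Le_n - n Le_(n-1), Le_0 = 1, Le_1 = x.\<close>
fun legendre :: "nat \<Rightarrow> real poly" where
  "legendre 0 = 1"
| "legendre (Suc 0) = [:0, 1:]"
| "legendre (Suc (Suc n)) =
     smult (1 / real (n + 2))
       (smult (real (2 * n + 3)) ([:0, 1:] * legendre (Suc n))
        - smult (real (n + 1)) (legendre n))"

text \<open>A real polynomial has only real zeros (the zero polynomial counts, by the
  usual convention of the multiplier-sequence literature).\<close>
definition only_real_zeros :: "real poly \<Rightarrow> bool" where
  "only_real_zeros p \<longleftrightarrow>
     p = 0 \<or> (\<forall>z::complex. poly (map_poly complex_of_real p) z = 0 \<longrightarrow> Im z = 0)"

definition legendre_multiplier_sequence :: "(nat \<Rightarrow> real) \<Rightarrow> bool" where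
  "legendre_multiplier_sequence \<gamma> \<longleftrightarrow>
     (\<forall>(n::nat) (a::nat \<Rightarrow> real).
        only_real_zeros (\<Sum>k\<le>n. smult (a k) (legendre k)) \<longrightarrow>
        only_real_zeros (\<Sum>k\<le>n. smult (a k * \<gamma> k) (legendre k)))"

end

theory Submission
  imports Defs "HOL-Computational_Algebra.Fundamental_Theorem_Algebra"
begin


abbreviation XX :: "real poly" where "XX \<equiv> [:0, 1:]"

lemma smult_nat: "smult (real n) p = of_nat n * p"
  by (simp add: of_nat_poly)

lemma leg_rec: "(of_nat n + 2) * legendre (Suc (Suc n)) =
   (2 * of_nat n + 3) * (XX * legendre (Suc n)) - (of_nat n + 1) * legendre n"
proof -
  have "smult (real (n+2)) (legendre (Suc (Suc n))) =
   smult (real (2 * n + 3)) (XX * legendre (Suc n)) - smult (real (n + 1)) (legendre n)"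
    by (simp del: mult_pCons_left)
  then show ?thesis by (simp only: smult_nat) (simp add: algebra_simps)
qed

lemma pderiv_XX: "pderiv (XX * p) = p + XX * pderiv p"
  by (simp add: pderiv_mult pderiv_pCons)

lemma pderiv_natc: "pderiv (of_nat n * p) = of_nat n * pderiv (p :: real poly)"
  by (simp add: pderiv_mult)

lemma pderiv_cmul: "pderiv c = 0 \<Longrightarrow> pderiv (c * p) = c * pderiv (p::real poly)"
  by (simp add: pderiv_mult)

lemma pderiv_lin1: "pderiv (of_nat n + 1 :: real poly) = 0"
  by (simp add: pderiv_add of_nat_poly)

lemma pderiv_lin3: "pderiv (of_nat n + numeral b :: real poly) = 0"
  by (simp add: pderiv_add of_nat_poly numeral_poly)

lemma pderiv_lin2: "pderiv (numeral a * of_nat n + numeral b :: real poly) = 0"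
  by (simp add: pderiv_mult pderiv_add of_nat_poly numeral_poly)

lemma cancel_nat: "(of_nat n + 2) * (a::real poly) = (of_nat n + 2) * b \<Longrightarrow> a = b"
proof -
  assume h: "(of_nat n + 2) * (a::real poly) = (of_nat n + 2) * b"
  have "(of_nat n + 2 :: real poly) = of_nat (n+2)" by simp
  also have "\<dots> \<noteq> 0" by (simp only: of_nat_poly) simp
  finally show ?thesis using h by simp
qed

lemma leg_AB: "pderiv (legendre (Suc n)) - XX * pderiv (legendre n) = (of_nat n + 1) * legendre n \<and>
   XX * pderiv (legendre (Suc n)) - pderiv (legendre n) = (of_nat n + 1) * legendre (Suc n)"
proof (induction n)
  case 0
  then show ?case by (simp add: pderiv_pCons)
next
  case (Suc n)
  define P where "P = legendre n"
  define Q where "Q = legendre (Suc n)"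
  define R where "R = legendre (Suc (Suc n))"
  define N where "N = (of_nat n :: real poly)"
  have hR: "(N + 2) * R = (2 * N + 3) * (XX * Q) - (N + 1) * P"
    unfolding P_def Q_def R_def N_def by (rule leg_rec)
  have hdR: "(N + 2) * pderiv R = (2 * N + 3) * (Q + XX * pderiv Q) - (N + 1) * pderiv P"
  proof -
    have "pderiv ((N + 2) * R) = pderiv ((2 * N + 3) * (XX * Q) - (N + 1) * P)"
      using hR by simp
    moreover have "pderiv ((N + 2) * R) = (N+2) * pderiv R"
      unfolding N_def by (rule pderiv_cmul[OF pderiv_lin3])
    moreover have "pderiv ((2 * N + 3) * (XX * Q) - (N + 1) * P) = (2 * N + 3) * (Q + XX * pderiv Q) - (N + 1) * pderiv P"
      unfolding N_def pderiv_diff pderiv_cmul[OF pderiv_lin2] pderiv_cmul[OF pderiv_lin1] pderiv_XX ..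
    ultimately show ?thesis by simp
  qed
  have IH1: "pderiv Q - XX * pderiv P = (N+1) * P" using Suc P_def Q_def N_def by simp
  have IH2: "XX * pderiv Q - pderiv P = (N+1) * Q" using Suc P_def Q_def N_def by simp
  have A: "pderiv R - XX * pderiv Q = (N + 2) * Q"
  proof -
    have "(N+2) * (pderiv R - XX * pderiv Q) = (N+2) * ((N+2) * Q)"
      using hdR IH2 by algebra
    then show ?thesis unfolding N_def by (rule cancel_nat)
  qed
  have C: "(XX*XX - 1) * pderiv Q = (N+1) * (XX * Q - P)"
    using IH1 IH2 by algebra
  have B: "XX * pderiv R - pderiv Q = (N + 2) * R"
  proof -
    have "(N+2) * (XX * pderiv R - pderiv Q) = (N+2) * ((N + 2) * R)"
      using A C hR by algebra
    then show ?thesis unfolding N_def by (rule cancel_nat)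
  qed
  show ?case using A B unfolding P_def Q_def R_def N_def by (simp add: algebra_simps)
qed

lemma leg_ode: "pderiv ([:-1,0,1:] * pderiv (legendre n)) = (of_nat n * (of_nat n + 1)) * legendre n"
proof (cases n)
  case 0
  then show ?thesis by simp
next
  case (Suc m)
  define P where "P = legendre m"
  define Q where "Q = legendre (Suc m)"
  define M where "M = (of_nat m :: real poly)"
  have IH1: "pderiv Q - XX * pderiv P = (M+1) * P" using leg_AB[of m] P_def Q_def M_def by simp
  have IH2: "XX * pderiv Q - pderiv P = (M+1) * Q" using leg_AB[of m] P_def Q_def M_def by simp
  have e: "[:-1,0,1:] = XX*XX - 1" by (simp add: one_pCons)
  have C: "[:-1,0,1:] * pderiv Q = (M+1) * (XX * Q - P)"
    unfolding e using IH1 IH2 by algebra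
  have "pderiv ([:-1,0,1:] * pderiv Q) = (M+1) * (Q + XX * pderiv Q - pderiv P)"
    unfolding C M_def pderiv_cmul[OF pderiv_lin1] pderiv_diff pderiv_XX by (simp add: algebra_simps)
  also have "\<dots> = (M+1) * (M+2) * Q" using IH2 by algebra
  finally show ?thesis using Suc Q_def M_def by (simp add: algebra_simps)
qed



definition LH :: "complex poly \<Rightarrow> bool" where
  "LH q \<longleftrightarrow> q \<noteq> 0 \<and> (\<forall>r. poly q r = 0 \<longrightarrow> Im r \<le> 0)"

lemma Im_inv_neg: "Im w > 0 \<Longrightarrow> Im (1 / w) < 0"
proof -
  assume h: "Im w > 0"
  have "(Re w)\<^sup>2 + (Im w)\<^sup>2 > 0" using h by (simp add: add_nonneg_pos)
  then show ?thesis using h by (simp add: Im_divide divide_neg_pos)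
qed

lemma logder:
  assumes "LH q" "Im y > 0"
  shows "poly q y \<noteq> 0 \<and> Im (poly (pderiv q) y / poly q y) \<le> 0 \<and>
         (degree q > 0 \<longrightarrow> Im (poly (pderiv q) y / poly q y) < 0)"
  using assms
proof (induction "degree q" arbitrary: q)
  case 0
  then obtain c where c: "q = [:c:]" by (metis degree_eq_zeroE)
  with 0 have "c \<noteq> 0" by (auto simp: LH_def)
  then show ?case using c 0 by simp
next
  case (Suc d)
  have "\<not> constant (poly q)" using Suc(2) constant_degree by (metis nat.distinct(1))
  then obtain r where r: "poly q r = 0" using fundamental_theorem_of_algebra by blast
  then have "[:-r, 1:] dvd q" using poly_eq_0_iff_dvd by blast
  then obtain q0 where q0: "q = [:-r, 1:] * q0" by (elim dvdE)
  have qnz: "q \<noteq> 0" using Suc(3) by (simp add: LH_def)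
  then have q0nz: "q0 \<noteq> 0" using q0 by auto
  have "degree q = degree [:-r, 1:] + degree q0" unfolding q0 by (rule degree_mult_eq) (use q0nz in auto)
  then have dq0: "d = degree q0" using Suc(2) by simp
  have LH0: "LH q0" using Suc(3) q0 q0nz by (auto simp: LH_def)
  from Suc(1)[OF dq0 LH0 Suc(4)] have IH:
    "poly q0 y \<noteq> 0" "Im (poly (pderiv q0) y / poly q0 y) \<le> 0" by auto
  have Imr: "Im r \<le> 0" using Suc(3) r by (simp add: LH_def)
  have yr: "Im (y - r) > 0" using Imr Suc(4) by simp
  then have yr0: "y - r \<noteq> 0" by auto
  have pq: "poly q y = (y - r) * poly q0 y"
  proof -
    have "poly q y = poly [:-r, 1:] y * poly q0 y" by (subst q0) (rule poly_mult)
    then show ?thesis by simp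
  qed
  have pdq: "poly (pderiv q) y = poly q0 y + (y - r) * poly (pderiv q0) y"
  proof -
    have "pderiv q = [:-r, 1:] * pderiv q0 + q0 * pderiv [:-r, 1:]" by (subst q0) (rule pderiv_mult)
    then have "poly (pderiv q) y = poly [:-r, 1:] y * poly (pderiv q0) y + poly q0 y * poly (pderiv [:-r, 1:]) y"
      by (simp only: poly_add poly_mult)
    then show ?thesis by (simp add: pderiv_pCons algebra_simps)
  qed
  have ratio: "poly (pderiv q) y / poly q y = 1 / (y - r) + poly (pderiv q0) y / poly q0 y"
    unfolding pq pdq using IH(1) yr0 by (simp add: field_simps)
  have "Im (1 / (y - r)) < 0" using Im_inv_neg yr by blast
  then have "Im (poly (pderiv q) y / poly q y) < 0" using ratio IH(2) by simp
  then show ?case using pq IH(1) yr0 by simp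
qed

lemma stepB:
  assumes "LH q" "Im s \<ge> 0" "Im y > 0" "poly (pderiv q) y - s * poly q y = 0"
  shows "s = 0 \<and> degree q = 0"
proof -
  from logder[OF assms(1,3)] have h: "poly q y \<noteq> 0"
    "degree q > 0 \<longrightarrow> Im (poly (pderiv q) y / poly q y) < 0" by auto
  have "poly (pderiv q) y / poly q y = s" using assms(4) h(1) by (simp add: field_simps)
  then have dq: "degree q = 0" using h(2) assms(2) by fastforce
  then have "pderiv q = 0" by (simp add: pderiv_eq_0_iff)
  then show ?thesis using assms(4) h(1) dq by simp
qed

lemma stepC:
  assumes "LH q" "Im s \<ge> 0" "\<not> (s = 0 \<and> degree q = 0)"
  shows "LH (pderiv q - smult s q)"
  unfolding LH_def
proof (intro conjI allI impI)
  show "pderiv q - smult s q \<noteq> 0"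
  proof
    assume "pderiv q - smult s q = 0"
    then have "poly (pderiv q) \<i> - s * poly q \<i> = 0"
      by (metis poly_0 poly_diff poly_smult)
    then show False using stepB[OF assms(1,2), of \<i>] assms(3) by simp
  qed
next
  fix r assume "poly (pderiv q - smult s q) r = 0"
  then have "poly (pderiv q) r - s * poly q r = 0" by simp
  then show "Im r \<le> 0" using stepB[OF assms(1,2)] assms(3) by (meson not_le)
qed

lemma upper_prod_ne_1:
  assumes "Im a > 0" "Im b > 0" shows "a * b \<noteq> 1"
proof
  assume h: "a * b = 1"
  have i0: "Im (a*b) = 0" and r0: "Re (a*b) = 1" using h by simp_all
  have i: "Re a * Im b + Im a * Re b = 0" using i0 by simp
  have r: "Re a * Re b - Im a * Im b = 1" using r0 by simp
  have "Re a * Re b \<le> 0"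
  proof (rule ccontr)
    assume "\<not> Re a * Re b \<le> 0"
    then have "(Re a > 0 \<and> Re b > 0) \<or> (Re a < 0 \<and> Re b < 0)"
      by (metis mult_nonneg_nonpos mult_nonpos_nonneg not_le_imp_less order_less_imp_le)
    then show False using i assms
      by (smt (verit) mult_pos_pos mult_neg_pos mult_pos_neg)
  qed
  moreover have "Im a * Im b > 0" using assms by simp
  ultimately show False using r by linarith
qed

lemma root_upper:
  fixes z s :: complex and \<beta> :: real
  assumes "Im z > 0" "0 \<le> \<beta>" "\<beta> \<le> 1" "(z^2 - 1) * s^2 + 2 * z * s + of_real \<beta> = 0"
  shows "Im s \<ge> 0"
proof (rule ccontr)
  assume "\<not> Im s \<ge> 0"
  then have Is: "Im s < 0" by simp
  then have s0: "s \<noteq> 0" by auto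
  define u where "u = 1 / s"
  have Iu: "Im u > 0" unfolding u_def using Im_inv_neg[of "-s"] Is by simp
  have "(z^2 - 1) + 2 * z * u + of_real \<beta> * u^2 = ((z^2 - 1) * s^2 + 2 * z * s + of_real \<beta>) / s^2"
    unfolding u_def using s0 by (simp add: field_simps power2_eq_square)
  then have eq: "z^2 - 1 + 2 * z * u + of_real \<beta> * u^2 = 0" using assms(4) by simp
  define g where "g = sqrt (1 - \<beta>)"
  have g2: "g^2 = 1 - \<beta>" unfolding g_def using assms(3) by simp
  have g1: "g \<le> 1" unfolding g_def using assms(2,3) by (simp add: real_sqrt_le_1_iff)
  have g0: "g \<ge> 0" unfolding g_def using assms(3) by simp
  have "(z + of_real (1 - g) * u) * (z + of_real (1 + g) * u) = z^2 + 2*z*u + of_real (1 - g^2) * u^2"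
    by (simp add: algebra_simps power2_eq_square)
  also have "\<dots> = 1"
  proof -
    have b: "complex_of_real \<beta> = of_real (1 - g^2)" using g2 by simp
    show ?thesis using eq unfolding b by (simp add: algebra_simps)
  qed
  finally have "(z + of_real (1 - g) * u) * (z + of_real (1 + g) * u) = 1" .
  moreover have "Im (z + of_real (1 - g) * u) > 0" using assms(1) Iu g1 by (simp add: add_pos_nonneg)
  moreover have "Im (z + of_real (1 + g) * u) > 0" using assms(1) Iu g0 by (simp add: add_pos_pos)
  ultimately show False using upper_prod_ne_1 by blast
qed




abbreviation oc :: "real poly \<Rightarrow> complex poly" where "oc \<equiv> map_poly complex_of_real"

lemma oc_add: "oc (p + q) = oc p + oc q"
  by (intro poly_eqI) (simp add: coeff_map_poly)
lemma oc_smult: "oc (smult c p) = smult (of_real c) (oc p)"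
  by (intro poly_eqI) (simp add: coeff_map_poly)
lemma oc_pderiv: "oc (pderiv p) = pderiv (oc p)"
  by (intro poly_eqI) (simp add: coeff_map_poly coeff_pderiv)
lemma oc_mult: "oc (p * q) = oc p * oc q"
  by (intro poly_eqI) (simp add: coeff_map_poly coeff_mult)
lemma oc_pCons: "oc (pCons a p) = pCons (of_real a) (oc p)"
  by (simp add: map_poly_pCons)

definition T :: "real \<Rightarrow> real poly \<Rightarrow> real poly" where
  "T \<beta> p = pderiv ([:-1,0,1:] * pderiv p) + smult \<beta> p"

lemma T_add: "T b (p + q) = T b p + T b q"
  unfolding T_def by (simp add: pderiv_add distrib_left smult_add_right)
lemma T_smult: "T b (smult c p) = smult c (T b p)"
  unfolding T_def pderiv_smult mult_smult_right smult_add_right smult_smult by (simp only: mult.commute)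
lemma T_leg: "T b (legendre k) = smult (real k ^ 2 + real k + b) (legendre k)"
  unfolding T_def leg_ode by (simp add: of_nat_poly smult_add_left power2_eq_square algebra_simps)

lemma T_sum: "T b (\<Sum>k\<le>n. smult (a k) (legendre k)) = (\<Sum>k\<le>n. smult (a k * (real k ^ 2 + real k + b)) (legendre k))"
  by (induction n) (simp_all add: T_add T_smult T_leg del: legendre.simps)

lemma T_expand: "T b p = [:-1,0,1:] * pderiv (pderiv p) + [:0,2:] * pderiv p + smult b p"
proof -
  have d: "pderiv [:-1,0,1::real:] = [:0,2:]" by (simp add: pderiv_pCons)
  show ?thesis unfolding T_def pderiv_mult d by (simp add: algebra_simps)
qed

lemma poly_oc_T: "poly (oc (T b p)) z = (z^2 - 1) * poly (pderiv (pderiv (oc p))) z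
     + 2 * z * poly (pderiv (oc p)) z + of_real b * poly (oc p) z"
  unfolding T_expand oc_add oc_mult oc_smult oc_pderiv oc_pCons
  by (simp add: algebra_simps power2_eq_square)




lemma oc_eq_0: "oc p = 0 \<longleftrightarrow> p = 0"
  by (simp add: map_poly_eq_0_iff)

lemma degree_oc: "degree (oc p) = degree p"
  by (simp add: degree_map_poly)

lemma core:
  fixes \<beta> :: real and z :: complex
  assumes orz: "only_real_zeros p" and b0: "0 \<le> \<beta>" and b1: "\<beta> \<le> 1"
    and Tnz: "T \<beta> p \<noteq> 0" and zI: "Im z > 0"
  shows "poly (oc (T \<beta> p)) z \<noteq> 0"
proof -
  have pnz: "p \<noteq> 0" using Tnz unfolding T_def by auto
  define pc where "pc = oc p"
  have LHp: "LH pc" unfolding LH_def pc_def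
    using orz pnz oc_eq_0 by (auto simp: only_real_zeros_def)
  show ?thesis
  proof (cases "degree p = 0")
    case True
    then obtain c where c: "p = [:c:]" by (metis degree_eq_zeroE)
    have "T \<beta> p = [:\<beta> * c:]" unfolding T_def c by simp
    then show ?thesis using Tnz by (simp add: map_poly_pCons)
  next
    case False
    then have dpc: "degree pc > 0" unfolding pc_def degree_oc by simp
    define c where "c = z^2 - 1"
    have cnz: "c \<noteq> 0"
    proof
      assume "c = 0"
      then have "(z - 1) * (z + 1) = 0" unfolding c_def by (simp add: algebra_simps power2_eq_square)
      then have "z = 1 \<or> z = -1" by (simp add: add_eq_0_iff2)
      then show False using zI by auto
    qed
    define w where "w = csqrt (z^2 - of_real \<beta> * c)"
    have w2: "w^2 = z^2 - of_real \<beta> * c" unfolding w_def by simp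
    define s1 where "s1 = (-z + w) / c"
    define s2 where "s2 = (-z - w) / c"
    have cs1: "c * s1 = -z + w" unfolding s1_def using cnz by simp
    have cs2: "c * s2 = -z - w" unfolding s2_def using cnz by simp
    have sum: "c * (s1 + s2) = -2 * z" unfolding distrib_left cs1 cs2 by simp
    have prod: "c * (s1 * s2) = of_real \<beta>"
    proof -
      have "c * (c * (s1 * s2)) = (c * s1) * (c * s2)" by (simp add: algebra_simps)
      also have "\<dots> = z^2 - w^2" unfolding cs1 cs2 by (simp add: algebra_simps power2_eq_square)
      also have "\<dots> = c * of_real \<beta>" using w2 by simp
      finally show ?thesis using cnz by simp
    qed
    have r1: "(z^2 - 1) * s1^2 + 2 * z * s1 + of_real \<beta> = 0"
    proof -
      have "(z^2 - 1) * s1^2 + 2 * z * s1 + of_real \<beta> = s1 * (c * (s1 + s2) + 2 * z)"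
        unfolding prod[symmetric] c_def by (simp add: algebra_simps power2_eq_square)
      also have "\<dots> = 0" unfolding sum by simp
      finally show ?thesis .
    qed
    have r2: "(z^2 - 1) * s2^2 + 2 * z * s2 + of_real \<beta> = 0"
    proof -
      have "(z^2 - 1) * s2^2 + 2 * z * s2 + of_real \<beta> = s2 * (c * (s1 + s2) + 2 * z)"
        unfolding prod[symmetric] c_def by (simp add: algebra_simps power2_eq_square)
      also have "\<dots> = 0" unfolding sum by simp
      finally show ?thesis .
    qed
    have I1: "Im s1 \<ge> 0" using root_upper[OF zI b0 b1 r1] .
    have I2: "Im s2 \<ge> 0" using root_upper[OF zI b0 b1 r2] .
    define q1 where "q1 = pderiv pc - smult s1 pc"
    have LH1: "LH q1" unfolding q1_def using stepC[OF LHp I1] dpc by simp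
    show ?thesis
    proof
      assume h: "poly (oc (T \<beta> p)) z = 0"
      have "poly (oc (T \<beta> p)) z = c * (poly (pderiv q1) z - s2 * poly q1 z)"
      proof -
        have "c * (poly (pderiv q1) z - s2 * poly q1 z)
          = c * poly (pderiv (pderiv pc)) z - c * (s1 + s2) * poly (pderiv pc) z + c * (s1 * s2) * poly pc z"
          unfolding q1_def by (simp add: pderiv_diff pderiv_smult algebra_simps)
        also have "\<dots> = (z^2 - 1) * poly (pderiv (pderiv pc)) z + 2 * z * poly (pderiv pc) z + of_real \<beta> * poly pc z"
          unfolding sum prod by (simp add: c_def)
        finally show ?thesis unfolding poly_oc_T pc_def by simp
      qed
      with h cnz have "poly (pderiv q1) z - s2 * poly q1 z = 0" by simp
      from stepB[OF LH1 I2 zI this] have s20: "s2 = 0" and dq1: "degree q1 = 0" by auto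
      have "of_real \<beta> = (0::complex)" using prod s20 by simp
      then have "c * s1 = -2 * z" using sum s20 by simp
      moreover have "z \<noteq> 0" using zI by auto
      ultimately have s1nz: "s1 \<noteq> 0" by auto
      have "coeff q1 (degree pc) = - s1 * lead_coeff pc"
        unfolding q1_def by (simp add: coeff_pderiv coeff_eq_0)
      moreover have "lead_coeff pc \<noteq> 0" using LHp by (simp add: LH_def)
      ultimately have "coeff q1 (degree pc) \<noteq> 0" using s1nz by simp
      then have "degree pc \<le> degree q1" by (rule le_degree)
      then show False using dq1 dpc by simp
    qed
  qed
qed

theorem proposition4p9:
  fixes \<alpha> \<beta> :: real
  assumes "\<alpha> = 1" and "0 \<le> \<beta>" and "\<beta> \<le> 1"
  shows "legendre_multiplier_sequence (\<lambda>k. real k ^ 2 + \<alpha> * real k + \<beta>)"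
  unfolding legendre_multiplier_sequence_def
proof (intro allI impI)
  fix n and a :: "nat \<Rightarrow> real"
  define p where "p = (\<Sum>k\<le>n. smult (a k) (legendre k))"
  assume "only_real_zeros (\<Sum>k\<le>n. smult (a k) (legendre k))"
  then have orz: "only_real_zeros p" unfolding p_def .
  have F: "(\<Sum>k\<le>n. smult (a k * (real k ^ 2 + \<alpha> * real k + \<beta>)) (legendre k)) = T \<beta> p"
    unfolding p_def T_sum assms(1) by simp
  show "only_real_zeros (\<Sum>k\<le>n. smult (a k * (real k ^ 2 + \<alpha> * real k + \<beta>)) (legendre k))"
    unfolding F only_real_zeros_def
  proof (cases "T \<beta> p = 0")
    case False
    have "Im z = 0" if z: "poly (oc (T \<beta> p)) z = 0" for z
    proof (rule ccontr)
      assume "Im z \<noteq> 0"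
      then consider "Im z > 0" | "Im (cnj z) > 0" by fastforce
      then show False
      proof cases
        case 1
        then show False using core[OF orz assms(2,3) False] z by blast
      next
        case 2
        have "poly (oc (T \<beta> p)) (cnj z) = 0"
          using z by (subst real_poly_cnj_root_iff) (auto simp: coeff_map_poly)
        then show False using core[OF orz assms(2,3) False 2] by blast
      qed
    qed
    then show "T \<beta> p = 0 \<or> (\<forall>z. poly (oc (T \<beta> p)) z = 0 \<longrightarrow> Im z = 0)" by blast
  qed simp
qed


end
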